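(* Let $n\ge1$, $\bm{N}=(N_0,\ldots,N_{n-1},-\sum_{i<n}N_i)\in\mathbb{Z}^{n+1}$ with $\mathcal{F}_n(\bm{N})$ nonempty, $s_k=\sum_{j=0}^kN_j$, $\bm\alpha=(s_0,\ldots,s_{n-1})$, $\bm\beta=(s_{n-1},\ldots,s_0)$. Then \[ \operatorname{cap}_{\bm\alpha,\bm\beta}\Big(\prod_{\substack{0\le i,j\le n-1\\ i+j\le n}}\frac{1}{1-x_iy_j}\Big)=\sup_{\bm{f}\in\mathcal{F}_n(\bm{N})}\ \prod_{\substack{0\le i,j\le n-1\\ i+j\le n}}\frac{(a_{ij}+1)^{a_{ij}+1}}{a_{ij}^{a_{ij}}}=\sup_{\bm{f}\in\mathcal{F}_n(\bm{N})}e^{\mathcal{H}(\bm{f})}, \] where $(a_{ij})=A(\bm{f})$ is the matrix associated with $\bm{f}$ as in the context.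
   Context: $\mathcal{F}_n(\bm{N})$ is the set of $\bm{f}=(f_{ij})_{0\le i<j\le n}\in\mathbb{R}_{\ge0}^{\binom{n+1}{2}}$ with $\sum_{j>i} f_{ij}-\sum_{k<i} f_{ki}=N_i$ for every $i$. For $\bm{f}\in\mathcal{F}_n(\bm{N})$, the $n\times n$ matrix $A(\bm{f})=(a_{ij})_{0\le i,j\le n-1}$ is defined by $a_{ij}=f_{i,n-j}$ if $i+j\le n-1$, $a_{i,n-i}=\sum_{0\le k<i}(N_k-f_{k,i})$ for $1\le i\le n-1$, and $a_{ij}=0$ if $i+j>n$; it has row sums $\bm\alpha$ and column sums $\bm\beta$. Convention $0^0=1$. For a power series $p$ in variables $\bm{z}$ with nonnegative coefficients and $\bm\gamma\ge0$, $\operatorname{cap}_{\bm\gamma}(p)=\inf_{\bm{z}>0}p(\bm{z})/\bm{z}^{\bm\gamma}$; here the variables are $(\bm{x},\bm{y})=(x_0,\ldots,x_{n-1},y_0,\ldots,y_{n-1})$ and the exponent vector is $(\bm\alpha,\bm\beta)$. With $h(t)=(t+1)\log(t+1)-t\log t$, the flow entropy is $\mathcal{H}(\bm{f})=\sum_{0\le i<j\le n}h(f_{ij})+\sum_{0<j<n}h\big(\sum_{0\le i<j}(N_i-f_{ij})\big)$. *)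

theory Defs
  imports "HOL-Analysis.Analysis"
begin

definition Nfull :: "nat \<Rightarrow> (nat \<Rightarrow> int) \<Rightarrow> nat \<Rightarrow> int" where
  "Nfull n N i = (if i < n then N i else if i = n then - (\<Sum>k<n. N k) else 0)"

definition flows :: "nat \<Rightarrow> (nat \<Rightarrow> int) \<Rightarrow> (nat \<Rightarrow> nat \<Rightarrow> real) set" where
  "flows n N = {f. (\<forall>i j. (i < j \<and> j \<le> n \<longrightarrow> 0 \<le> f i j) \<and>
                         (\<not> (i < j \<and> j \<le> n) \<longrightarrow> f i j = 0)) \<and>
                   (\<forall>i\<le>n. (\<Sum>j\<in>{i<..n}. f i j) - (\<Sum>k<i. f k i) = of_int (Nfull n N i))}"

definition Amat :: "nat \<Rightarrow> (nat \<Rightarrow> int) \<Rightarrow> (nat \<Rightarrow> nat \<Rightarrow> real) \<Rightarrow> nat \<Rightarrow> nat \<Rightarrow> real" where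
  "Amat n N f i j =
     (if i + j \<le> n - 1 then f i (n - j)
      else if 1 \<le> i \<and> i \<le> n - 1 \<and> j = n - i then (\<Sum>k<i. of_int (N k) - f k i)
      else 0)"

definition Pidx :: "nat \<Rightarrow> (nat \<times> nat) set" where
  "Pidx n = {(i, j). i < n \<and> j < n \<and> i + j \<le> n}"

definition psi :: "real \<Rightarrow> real" where
  "psi t = (t + 1) powr (t + 1) / (if t = 0 then 1 else t powr t)"

definition hfun :: "real \<Rightarrow> real" where
  "hfun t = (t + 1) * ln (t + 1) - t * ln t"

definition Hent :: "nat \<Rightarrow> (nat \<Rightarrow> int) \<Rightarrow> (nat \<Rightarrow> nat \<Rightarrow> real) \<Rightarrow> real" where
  "Hent n N f = (\<Sum>(i, j)\<in>{(i, j). i < j \<and> j \<le> n}. hfun (f i j))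
              + (\<Sum>j\<in>{0<..<n}. hfun (\<Sum>i<j. of_int (N i) - f i j))"

text \<open>Capacity of a (nonnegative-coefficient) power series p in variables indexed by I,
  given as its value function (in [0,\<infinity>], \<infinity> where it diverges):
  cap_gamma(p) = inf_{z > 0} p(z) / z^gamma.\<close>
definition cap :: "'v set \<Rightarrow> ('v \<Rightarrow> real) \<Rightarrow> (('v \<Rightarrow> real) \<Rightarrow> ennreal) \<Rightarrow> ennreal" where
  "cap I \<gamma> p = (INF z\<in>{z. \<forall>v\<in>I. 0 < z v}. p z / ennreal (\<Prod>v\<in>I. z v powr \<gamma> v))"

text \<open>Variables (x_0..x_(n-1), y_0..y_(n-1)) as Inl i / Inr j.\<close>
definition vars :: "nat \<Rightarrow> (nat + nat) set" where
  "vars n = Inl ` {..<n} \<union> Inr ` {..<n}"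

text \<open>Value of prod_{(i,j) in Pidx} 1/(1 - x_i y_j) as a power series (expanded geometric series).\<close>
definition gen_series :: "nat \<Rightarrow> ((nat + nat) \<Rightarrow> real) \<Rightarrow> ennreal" where
  "gen_series n z = (\<Prod>(i, j)\<in>Pidx n. (\<Sum>k. ennreal ((z (Inl i) * z (Inr j)) ^ k)))"

definition gamma_ab :: "nat \<Rightarrow> (nat \<Rightarrow> int) \<Rightarrow> (nat + nat) \<Rightarrow> real" where
  "gamma_ab n N v = (case v of
       Inl i \<Rightarrow> of_int (\<Sum>k\<le>i. N k)
     | Inr j \<Rightarrow> of_int (\<Sum>k\<le>n - 1 - j. N k))"

end

theory Submission
  imports Defs "HOL-Real_Asymp.Real_Asymp"
begin


definition phi :: "real \<Rightarrow> real" where "phi w = - ln (1 - exp w)"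

lemma phi_pos: assumes "w < 0" shows "0 \<le> phi w"
proof -
  have "exp w < 1" using assms by simp
  moreover have "0 < exp w" by simp
  ultimately have "ln (1 - exp w) \<le> 0" by (simp add: ln_le_zero_iff)
  then show ?thesis by (simp add: phi_def)
qed

lemma hfun_0[simp]: "hfun 0 = 0" by (simp add: hfun_def)

lemma key_ineq:
  assumes t: "0 \<le> t" and w: "w < 0"
  shows "hfun t \<le> phi w - t * w"
proof (cases "t = 0")
  case True then show ?thesis using phi_pos[OF w] by simp
next
  case False
  then have tp: "t > 0" using t by simp
  define r where "r = exp w"
  have r0: "0 < r" and r1: "r < 1" using w by (auto simp: r_def)
  have lr: "ln r = w" by (simp add: r_def)
  have A: "ln ((t+1) * r / t) \<le> (t+1) * r / t - 1"
    by (rule ln_le_minus_one) (use tp r0 in simp)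
  have B: "ln ((t+1) * (1 - r)) \<le> (t+1) * (1 - r) - 1"
    by (rule ln_le_minus_one) (use tp r1 in simp)
  have A': "ln ((t+1) * r / t) = ln (t+1) + ln r - ln t"
    using tp r0 by (simp add: ln_div ln_mult)
  have B': "ln ((t+1) * (1 - r)) = ln (t+1) + ln (1 - r)"
    using tp r1 by (simp add: ln_mult)
  have "t * ln ((t+1) * r / t) \<le> t * ((t+1) * r / t - 1)"
    using A tp by (intro mult_left_mono) auto
  also have "\<dots> = (t+1) * r - t" using tp by (simp add: field_simps)
  finally have A2: "t * (ln (t+1) + ln r - ln t) \<le> (t+1) * r - t" using A' by simp
  have "hfun t - (phi w - t * w) = (t+1)*ln(t+1) - t*ln t + ln(1-r) + t*ln r"
    by (simp add: hfun_def phi_def r_def)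
  also have "\<dots> = t * (ln (t+1) + ln r - ln t) + (ln (t+1) + ln (1 - r))"
    by (simp add: algebra_simps)
  also have "\<dots> \<le> ((t+1) * r - t) + ((t+1) * (1 - r) - 1)"
    using A2 B B' by linarith
  also have "\<dots> = 0" by (simp add: algebra_simps)
  finally show ?thesis by simp
qed

lemma key_eq:
  assumes w: "w < 0"
  shows "hfun (exp w / (1 - exp w)) = phi w - (exp w / (1 - exp w)) * w"
proof -
  define r where "r = exp w"
  have r0: "0 < r" and r1: "r < 1" using w by (auto simp: r_def)
  define t where "t = r / (1 - r)"
  have tp: "t > 0" using r0 r1 by (simp add: t_def)
  have t1: "t + 1 = 1 / (1 - r)" using r1 by (simp add: t_def field_simps)
  have l1: "ln (t + 1) = - ln (1 - r)" using t1 r1 by (simp add: ln_div)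
  have l2: "ln t = ln r - ln (1 - r)" using r0 r1 by (simp add: t_def ln_div)
  have "hfun t = (t+1) * (- ln (1 - r)) - t * (ln r - ln (1 - r))"
    by (simp add: hfun_def l1 l2)
  also have "\<dots> = - ln (1 - r) - t * ln r" by (simp add: algebra_simps)
  finally show ?thesis by (simp add: t_def r_def phi_def)
qed

lemma psi_exp_hfun:
  assumes "0 \<le> t" shows "psi t = exp (hfun t)"
proof (cases "t = 0")
  case True then show ?thesis by (simp add: psi_def hfun_def)
next
  case False
  then have "t > 0" using assms by simp
  then show ?thesis
    by (simp add: psi_def hfun_def powr_def exp_diff)
qed

lemma hfun_nonneg: assumes "0 \<le> t" shows "0 \<le> hfun t"
proof -
  have "hfun t \<le> phi (-1) - t * (-1)" using key_ineq[OF assms, of "-1"] by simp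
  show ?thesis
  proof (cases "t = 0")
    case True then show ?thesis by simp
  next
    case False
    then have tp: "t > 0" using assms by simp
    have "ln t \<le> ln (t+1)" using tp by simp
    moreover have "0 \<le> ln (t+1)" using tp by simp
    ultimately have "t * ln t \<le> t * ln (t+1)" using tp by (intro mult_left_mono) auto
    also have "\<dots> \<le> (t+1) * ln (t+1)" using \<open>0 \<le> ln (t+1)\<close> by (intro mult_right_mono) auto
    finally show ?thesis by (simp add: hfun_def)
  qed
qed

lemma xlnx_right: "((\<lambda>t::real. t * ln t) \<longlongrightarrow> 0) (at_right 0)"
  by real_asymp

lemma cont_xlnx: "continuous_on {0..} (\<lambda>t::real. t * ln t)"
  unfolding continuous_on_def
proof (intro ballI)
  fix x :: real assume "x \<in> {0..}"
  show "((\<lambda>t. t * ln t) \<longlongrightarrow> x * ln x) (at x within {0..})"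
  proof (cases "x = 0")
    case True
    have "at (0::real) within {0..} = at_right 0"
      by (simp add: at_within_Ici_at_right)
    then show ?thesis using True xlnx_right by simp
  next
    case False
    then have "x > 0" using \<open>x \<in> {0..}\<close> by auto
    have "isCont (\<lambda>t. t * ln t) x" using \<open>x>0\<close> by (intro continuous_intros) auto
    then show ?thesis by (simp add: isCont_def tendsto_within_subset[where S=UNIV] continuous_at_imp_continuous_at_within)
  qed
qed

lemma cont_hfun: "continuous_on {0..} hfun"
proof -
  have "continuous_on {0..} (\<lambda>t::real. (t+1) * ln (t+1))"
    by (intro continuous_intros) auto
  then have "continuous_on {0..} (\<lambda>t::real. (t+1) * ln (t+1) - t * ln t)"
    using cont_xlnx by (rule continuous_on_diff)
  then show ?thesis by (simp add: hfun_def[abs_def])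
qed



definition ind :: "nat + nat \<Rightarrow> nat \<times> nat \<Rightarrow> real" where
  "ind c ij = (if c = Inl (fst ij) then 1 else 0) + (if c = Inr (snd ij) then 1 else 0)"

definition marg :: "nat \<Rightarrow> (nat \<Rightarrow> nat \<Rightarrow> real) \<Rightarrow> nat + nat \<Rightarrow> real" where
  "marg n a c = (\<Sum>(i,j)\<in>Pidx n. a i j * ind c (i,j))"

definition Gf :: "nat \<Rightarrow> (nat \<Rightarrow> nat \<Rightarrow> real) \<Rightarrow> real" where
  "Gf n a = (\<Sum>(i,j)\<in>Pidx n. hfun (a i j))"

definition Phi :: "nat \<Rightarrow> (nat \<Rightarrow> int) \<Rightarrow> (nat + nat \<Rightarrow> real) \<Rightarrow> real" where
  "Phi n N q = (\<Sum>(i,j)\<in>Pidx n. phi (q (Inl i) + q (Inr j))) - (\<Sum>c\<in>vars n. gamma_ab n N c * q c)"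

definition inP :: "nat \<Rightarrow> (nat \<Rightarrow> int) \<Rightarrow> (nat \<Rightarrow> nat \<Rightarrow> real) \<Rightarrow> bool" where
  "inP n N a \<longleftrightarrow> (\<forall>(i,j)\<in>Pidx n. 0 \<le> a i j) \<and> (\<forall>c\<in>vars n. marg n a c = gamma_ab n N c)"

definition Dom :: "nat \<Rightarrow> (nat + nat \<Rightarrow> real) set" where
  "Dom n = {q. \<forall>(i,j)\<in>Pidx n. q (Inl i) + q (Inr j) < 0}"

lemma finite_Pidx[simp]: "finite (Pidx n)"
proof -
  have "Pidx n \<subseteq> {..<n} \<times> {..<n}" by (auto simp: Pidx_def)
  then show ?thesis by (rule finite_subset) auto
qed

lemma finite_vars[simp]: "finite (vars n)" by (simp add: vars_def)

lemma sum_ind: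
  assumes "(i,j) \<in> Pidx n"
  shows "(\<Sum>c\<in>vars n. q c * ind c (i,j)) = q (Inl i) + q (Inr j)"
proof -
  have iv: "Inl i \<in> vars n" "Inr j \<in> vars n" using assms by (auto simp: Pidx_def vars_def)
  have e: "\<And>c. q c * ind c (i,j) = (if c = Inl i then q c else 0) + (if c = Inr j then q c else 0)"
    by (auto simp: ind_def)
  have "(\<Sum>c\<in>vars n. q c * ind c (i,j)) =
        (\<Sum>c\<in>vars n. (if c = Inl i then q c else 0)) + (\<Sum>c\<in>vars n. (if c = Inr j then q c else 0))"
    by (simp only: e sum.distrib)
  also have "\<dots> = q (Inl i) + q (Inr j)" using iv by (simp add: sum.delta)
  finally show ?thesis .
qed

lemma pair_sum:
  "(\<Sum>(i,j)\<in>Pidx n. a i j * (q (Inl i) + q (Inr j))) = (\<Sum>c\<in>vars n. marg n a c * q c)"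
proof -
  have "(\<Sum>(i,j)\<in>Pidx n. a i j * (q (Inl i) + q (Inr j))) =
        (\<Sum>(i,j)\<in>Pidx n. \<Sum>c\<in>vars n. a i j * q c * ind c (i,j))"
    by (intro sum.cong refl) (auto simp: sum_ind[symmetric] sum_distrib_left mult.assoc)
  also have "\<dots> = (\<Sum>c\<in>vars n. \<Sum>(i,j)\<in>Pidx n. a i j * q c * ind c (i,j))"
    by (subst sum.swap) (simp add: case_prod_unfold)
  also have "\<dots> = (\<Sum>c\<in>vars n. marg n a c * q c)"
    by (simp add: marg_def sum_distrib_left case_prod_unfold mult_ac)
  finally show ?thesis .
qed

lemma Phi_ge:
  assumes "inP n N a" "q \<in> Dom n"
  shows "Gf n a \<le> Phi n N q"
proof -
  have "Gf n a \<le> (\<Sum>(i,j)\<in>Pidx n. phi (q (Inl i) + q (Inr j)) - a i j * (q (Inl i) + q (Inr j)))"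
    unfolding Gf_def
    by (intro sum_mono) (use assms in \<open>auto simp: inP_def Dom_def intro!: key_ineq\<close>)
  also have "\<dots> = (\<Sum>(i,j)\<in>Pidx n. phi (q (Inl i) + q (Inr j))) - (\<Sum>(i,j)\<in>Pidx n. a i j * (q (Inl i) + q (Inr j)))"
    by (simp add: sum_subtractf case_prod_unfold)
  also have "(\<Sum>(i,j)\<in>Pidx n. a i j * (q (Inl i) + q (Inr j))) = (\<Sum>c\<in>vars n. gamma_ab n N c * q c)"
    unfolding pair_sum using assms(1) by (intro sum.cong refl) (auto simp: inP_def)
  also have "(\<Sum>(i,j)\<in>Pidx n. phi (q (Inl i) + q (Inr j))) - (\<Sum>c\<in>vars n. gamma_ab n N c * q c) = Phi n N q"
    by (simp add: Phi_def)
  finally show ?thesis .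
qed

lemma geom_ennreal:
  assumes "0 \<le> r" "r < 1"
  shows "(\<Sum>k. ennreal (r ^ k)) = ennreal (1 / (1 - r))"
  using assms by (intro suminf_ennreal_eq geometric_sums) auto

lemma geom_ennreal_top:
  assumes "1 \<le> r"
  shows "(\<Sum>k. ennreal (r ^ k)) = top"
proof (rule summable_iff_suminf_neq_top)
  show "\<And>k. 0 \<le> r ^ k" using assms by simp
  show "\<not> summable (\<lambda>k. r ^ k)" using assms by (simp add: summable_geometric_iff)
qed

lemma ratio_eq:
  assumes zp: "\<forall>c\<in>vars n. 0 < z c"
    and lt: "\<forall>(i,j)\<in>Pidx n. z (Inl i) * z (Inr j) < 1"
  shows "gen_series n z / ennreal (\<Prod>c\<in>vars n. z c powr gamma_ab n N c)
         = ennreal (exp (Phi n N (\<lambda>c. ln (z c))))"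
proof -
  have zz: "0 < z (Inl i) * z (Inr j)" if "(i,j) \<in> Pidx n" for i j
    using zp that by (auto simp: vars_def Pidx_def)
  have "gen_series n z = (\<Prod>(i,j)\<in>Pidx n. ennreal (1 / (1 - z (Inl i) * z (Inr j))))"
    unfolding gen_series_def
    by (intro prod.cong refl) (use zz lt in \<open>auto simp: power_mult_distrib[symmetric] intro!: geom_ennreal less_imp_le\<close>)
  also have "\<dots> = ennreal (\<Prod>(i,j)\<in>Pidx n. 1 / (1 - z (Inl i) * z (Inr j)))"
    using lt by (subst prod_ennreal[symmetric]) (auto simp: case_prod_unfold intro!: prod.cong)
  also have "(\<Prod>(i,j)\<in>Pidx n. 1 / (1 - z (Inl i) * z (Inr j))) =
             (\<Prod>(i,j)\<in>Pidx n. exp (phi (ln (z (Inl i)) + ln (z (Inr j)))))"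
  proof (intro prod.cong refl, clarify)
    fix i j assume ij: "(i,j) \<in> Pidx n"
    have e: "exp (ln (z (Inl i)) + ln (z (Inr j))) = z (Inl i) * z (Inr j)"
      using zp ij by (auto simp: exp_add vars_def Pidx_def)
    have "1 - z (Inl i) * z (Inr j) > 0" using lt ij by auto
    then show "1 / (1 - z (Inl i) * z (Inr j)) = exp (phi (ln (z (Inl i)) + ln (z (Inr j))))"
      by (simp add: phi_def e exp_minus inverse_eq_divide)
  qed
  also have "\<dots> = exp (\<Sum>(i,j)\<in>Pidx n. phi (ln (z (Inl i)) + ln (z (Inr j))))"
    by (simp add: exp_sum case_prod_unfold)
  finally have g: "gen_series n z = ennreal (exp (\<Sum>(i,j)\<in>Pidx n. phi (ln (z (Inl i)) + ln (z (Inr j)))))" .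
  have d: "(\<Prod>c\<in>vars n. z c powr gamma_ab n N c) = exp (\<Sum>c\<in>vars n. gamma_ab n N c * ln (z c))"
  proof -
    have "(\<Prod>c\<in>vars n. z c powr gamma_ab n N c) = (\<Prod>c\<in>vars n. exp (gamma_ab n N c * ln (z c)))"
      using zp by (intro prod.cong refl) (auto simp: powr_def mult.commute)
    then show ?thesis by (simp add: exp_sum)
  qed
  show ?thesis
    unfolding g d
    by (subst divide_ennreal) (auto simp: Phi_def exp_diff)
qed

lemma ratio_top:
  assumes zp: "\<forall>c\<in>vars n. 0 < z c"
    and ge: "(i,j) \<in> Pidx n" "1 \<le> z (Inl i) * z (Inr j)"
  shows "gen_series n z = top"
  unfolding gen_series_def
proof (subst ennreal_prod_eq_top, intro conjI)
  show "finite (Pidx n)" by simp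
  show "\<forall>x\<in>Pidx n. (case x of (i, j) \<Rightarrow> \<Sum>k. ennreal ((z (Inl i) * z (Inr j)) ^ k)) \<noteq> 0"
  proof (clarify)
    fix i' j' assume "(i',j') \<in> Pidx n" and h: "(\<Sum>k. ennreal ((z (Inl i') * z (Inr j')) ^ k)) = 0"
    have "ennreal ((z (Inl i') * z (Inr j')) ^ 0) \<le> (\<Sum>k. ennreal ((z (Inl i') * z (Inr j')) ^ k))"
      using sum_le_suminf[OF summableI, of "{0}" "\<lambda>k. ennreal ((z (Inl i') * z (Inr j')) ^ k)"] by simp
    then show False using h by simp
  qed
  show "\<exists>x\<in>Pidx n. (case x of (i, j) \<Rightarrow> \<Sum>k. ennreal ((z (Inl i) * z (Inr j)) ^ k)) = top"
    using ge by (intro bexI[of _ "(i,j)"]) (auto intro: geom_ennreal_top)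
qed



lemma set_row: "(i::nat) < n \<Longrightarrow> {j. j<n \<and> i+j \<le> n} = {j. i + j < n} \<union> (if 1 \<le> i then {n-i} else {})"
  by (rule set_eqI) (cases "1 \<le> i"; simp; arith)
lemma set_col: "(j::nat) < n \<Longrightarrow> {i. i<n \<and> i+j \<le> n} = {..<n-j} \<union> (if 1 \<le> j then {n-j} else {})"
  by (rule set_eqI) (cases "1 \<le> j"; simp; arith)

lemma sum_split_row:
  assumes "(i::nat) < n"
  shows "(\<Sum>j\<in>{j. j<n \<and> i+j \<le> n}. g j) = (\<Sum>m\<in>{i<..n}. g (n-m)) + (if 1 \<le> i then g (n-i) else 0)"
proof -
  have U: "{j. j<n \<and> i+j \<le> n} = {j. i + j < n} \<union> (if 1 \<le> i then {n-i} else {})"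
    by (rule set_row[OF assms])
  have D: "{j. i + j < n} \<inter> (if 1 \<le> i then {n-i} else {}) = {}" by auto
  have F: "finite {j. i + j < n}" by (rule finite_subset[of _ "{..<n}"]) auto
  have R: "(\<Sum>j\<in>{j. i + j < n}. g j) = (\<Sum>m\<in>{i<..n}. g (n-m))"
    by (rule sum.reindex_bij_witness[where i="\<lambda>m. n - m" and j="\<lambda>j. n - j"]) auto
  show ?thesis
    unfolding U using D F R by (subst sum.union_disjoint) auto
qed

lemma sum_split_col:
  assumes "(j::nat) < n"
  shows "(\<Sum>i\<in>{i. i<n \<and> i+j \<le> n}. g i) = (\<Sum>k<n-j. g k) + (if 1 \<le> j then g (n-j) else 0)"
proof -
  have U: "{i. i<n \<and> i+j \<le> n} = {..<n-j} \<union> (if 1 \<le> j then {n-j} else {})"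
    by (rule set_col[OF assms])
  show ?thesis unfolding U by (subst sum.union_disjoint) auto
qed

lemma marg_Inl:
  assumes "i < n"
  shows "marg n b (Inl i) = (\<Sum>j\<in>{j. j<n \<and> i+j \<le> n}. b i j)"
proof -
  have "marg n b (Inl i) = (\<Sum>x\<in>Pidx n. if fst x = i then b (fst x) (snd x) else 0)"
    unfolding marg_def by (intro sum.cong refl) (auto simp: ind_def)
  also have "\<dots> = (\<Sum>x\<in>{x\<in>Pidx n. fst x = i}. b (fst x) (snd x))"
    by (rule sum.inter_filter[symmetric]) simp
  also have "{x\<in>Pidx n. fst x = i} = Pair i ` {j. j<n \<and> i+j \<le> n}"
    using assms by (auto simp: Pidx_def)
  also have "(\<Sum>x\<in>Pair i ` {j. j<n \<and> i+j \<le> n}. b (fst x) (snd x)) = (\<Sum>j\<in>{j. j<n \<and> i+j \<le> n}. b i j)"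
    by (subst sum.reindex) (auto simp: inj_on_def)
  finally show ?thesis .
qed

lemma marg_Inr:
  assumes "j < n"
  shows "marg n b (Inr j) = (\<Sum>i\<in>{i. i<n \<and> i+j \<le> n}. b i j)"
proof -
  have "marg n b (Inr j) = (\<Sum>x\<in>Pidx n. if snd x = j then b (fst x) (snd x) else 0)"
    unfolding marg_def by (intro sum.cong refl) (auto simp: ind_def)
  also have "\<dots> = (\<Sum>x\<in>{x\<in>Pidx n. snd x = j}. b (fst x) (snd x))"
    by (rule sum.inter_filter[symmetric]) simp
  also have "{x\<in>Pidx n. snd x = j} = (\<lambda>i. (i,j)) ` {i. i<n \<and> i+j \<le> n}"
    using assms by (auto simp: Pidx_def)
  also have "(\<Sum>x\<in>(\<lambda>i. (i,j)) ` {i. i<n \<and> i+j \<le> n}. b (fst x) (snd x)) = (\<Sum>i\<in>{i. i<n \<and> i+j \<le> n}. b i j)"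
    by (subst sum.reindex) (auto simp: inj_on_def)
  finally show ?thesis .
qed

lemma marg_Inl_split:
  assumes "i < n"
  shows "marg n b (Inl i) = (\<Sum>m\<in>{i<..n}. b i (n-m)) + (if 1 \<le> i then b i (n-i) else 0)"
  using assms by (simp add: marg_Inl sum_split_row)

lemma marg_Inr_split:
  assumes "j < n"
  shows "marg n b (Inr j) = (\<Sum>k<n-j. b k j) + (if 1 \<le> j then b (n-j) j else 0)"
  using assms by (simp add: marg_Inr sum_split_col)



lemma flows_nonneg: "f \<in> flows n N \<Longrightarrow> 0 \<le> f i j"
  unfolding flows_def by (cases "i < j \<and> j \<le> n") auto

lemma flows_zero: "f \<in> flows n N \<Longrightarrow> \<not> (i < j \<and> j \<le> n) \<Longrightarrow> f i j = 0"
  unfolding flows_def by auto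

lemma flows_cons: "f \<in> flows n N \<Longrightarrow> i \<le> n \<Longrightarrow>
   (\<Sum>j\<in>{i<..n}. f i j) - (\<Sum>k<i. f k i) = of_int (Nfull n N i)"
  unfolding flows_def by auto

lemma sum_atMost_split: "(\<Sum>k\<le>(i::nat). g k) = (\<Sum>k<i. g k) + (g i :: 'a::comm_monoid_add)"
  using sum.lessThan_Suc[of g i] by (simp add: lessThan_Suc_atMost)

lemma inflow_le:
  assumes f: "f \<in> flows n N" and i: "1 \<le> i" "i \<le> n"
  shows "(\<Sum>k<i. f k i) \<le> (\<Sum>k<i. of_int (N k))"
proof -
  have out: "(\<Sum>m\<in>{k<..n}. f k m) = (\<Sum>m\<le>n. f k m)" for k
    by (rule sum.mono_neutral_left) (auto intro: flows_zero[OF f])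
  have inn: "(\<Sum>l<k. f l k) = (\<Sum>l<i. f l k)" if "k < i" for k
  proof -
    have "(\<Sum>l<k. f l k) = (\<Sum>l<i. f l k)"
      by (rule sum.mono_neutral_left) (use that in \<open>auto intro: flows_zero[OF f]\<close>)
    then show ?thesis .
  qed
  have ge: "(\<Sum>m<i. f k m) + f k i \<le> (\<Sum>m\<le>n. f k m)" for k
  proof -
    have "(\<Sum>m<i. f k m) + f k i = (\<Sum>m\<in>insert i {..<i}. f k m)" by simp
    also have "\<dots> \<le> (\<Sum>m\<le>n. f k m)"
      by (rule sum_mono2) (use i in \<open>auto intro: flows_nonneg[OF f]\<close>)
    finally show ?thesis .
  qed
  have "(\<Sum>k<i. of_int (N k)) = (\<Sum>k<i. (\<Sum>m\<in>{k<..n}. f k m) - (\<Sum>l<k. f l k))"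
    using flows_cons[OF f] i by (intro sum.cong refl) (auto simp: Nfull_def)
  also have "\<dots> = (\<Sum>k<i. (\<Sum>m\<le>n. f k m) - (\<Sum>l<i. f l k))"
    by (intro sum.cong refl) (simp add: out inn)
  also have "\<dots> = (\<Sum>k<i. \<Sum>m\<le>n. f k m) - (\<Sum>k<i. \<Sum>l<i. f l k)"
    by (simp add: sum_subtractf)
  also have "(\<Sum>k<i. \<Sum>l<i. f l k) = (\<Sum>k<i. \<Sum>m<i. f k m)"
    by (rule sum.swap)
  finally have eq: "(\<Sum>k<i. of_int (N k)) = (\<Sum>k<i. \<Sum>m\<le>n. f k m) - (\<Sum>k<i. \<Sum>m<i. f k m)" .
  have "(\<Sum>k<i. \<Sum>m<i. f k m) + (\<Sum>k<i. f k i) \<le> (\<Sum>k<i. \<Sum>m\<le>n. f k m)"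
    using ge by (simp add: sum.distrib[symmetric] sum_mono)
  then show ?thesis using eq by linarith
qed

lemma Amat_row:
  assumes "i < n"
  shows "marg n (Amat n N f) (Inl i) = (\<Sum>m\<in>{i<..n}. f i m) + (if 1 \<le> i then (\<Sum>k<i. of_int (N k) - f k i) else 0)"
proof -
  have "(\<Sum>m\<in>{i<..n}. Amat n N f i (n-m)) = (\<Sum>m\<in>{i<..n}. f i m)"
    by (intro sum.cong refl) (auto simp: Amat_def)
  moreover have "1 \<le> i \<Longrightarrow> Amat n N f i (n-i) = (\<Sum>k<i. of_int (N k) - f k i)"
    using assms by (auto simp: Amat_def)
  ultimately show ?thesis using assms by (simp add: marg_Inl_split)
qed

lemma Amat_col:
  assumes "j < n"
  shows "marg n (Amat n N f) (Inr j) = (\<Sum>k<n-j. f k (n-j)) + (if 1 \<le> j then (\<Sum>k<n-j. of_int (N k) - f k (n-j)) else 0)"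
proof -
  have "(\<Sum>k<n-j. Amat n N f k j) = (\<Sum>k<n-j. f k (n-j))"
    by (intro sum.cong refl) (auto simp: Amat_def)
  moreover have "1 \<le> j \<Longrightarrow> Amat n N f (n-j) j = (\<Sum>k<n-j. of_int (N k) - f k (n-j))"
    using assms by (auto simp: Amat_def)
  ultimately show ?thesis using assms by (simp add: marg_Inr_split)
qed

lemma gamma_Inl: "gamma_ab n N (Inl i) = (\<Sum>k<i. of_int (N k)) + of_int (N i)"
  by (simp add: gamma_ab_def sum_atMost_split)

lemma gamma_Inr: "j < n \<Longrightarrow> gamma_ab n N (Inr j) = (\<Sum>k<n-j. of_int (N k))"
proof -
  assume "j < n"
  then have "{..n - 1 - j} = {..<n-j}" by auto
  then show ?thesis by (simp add: gamma_ab_def)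
qed

lemma F1:
  assumes f: "f \<in> flows n N" and n: "1 \<le> n"
  shows "inP n N (Amat n N f)"
  unfolding inP_def
proof (intro conjI ballI)
  fix x assume x: "x \<in> Pidx n"
  obtain i j where ij: "x = (i,j)" by (cases x)
  have "0 \<le> Amat n N f i j"
  proof (cases "i + j \<le> n - 1")
    case True then show ?thesis by (simp add: Amat_def flows_nonneg[OF f])
  next
    case False
    show ?thesis
    proof (cases "1 \<le> i \<and> i \<le> n - 1 \<and> j = n - i")
      case True
      then have "(\<Sum>k<i. f k i) \<le> (\<Sum>k<i. of_int (N k))" using inflow_le[OF f] by auto
      moreover have "Amat n N f i j = (\<Sum>k<i. of_int (N k) - f k i)" using False True by (simp add: Amat_def)
      ultimately show ?thesis by (simp add: sum_subtractf)
    next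
      case F2: False
      have "Amat n N f i j = 0" unfolding Amat_def using False F2 by presburger
      then show ?thesis by simp
    qed
  qed
  then show "case x of (i, j) \<Rightarrow> 0 \<le> Amat n N f i j" using ij by simp
next
  fix c assume c: "c \<in> vars n"
  show "marg n (Amat n N f) c = gamma_ab n N c"
  proof (cases c)
    case (Inl i)
    then have i: "i < n" using c by (auto simp: vars_def)
    have cons: "(\<Sum>m\<in>{i<..n}. f i m) - (\<Sum>k<i. f k i) = of_int (N i)"
      using flows_cons[OF f, of i] i by (simp add: Nfull_def)
    show ?thesis
    proof (cases "1 \<le> i")
      case True
      then show ?thesis using cons i by (simp add: Inl Amat_row gamma_Inl sum_subtractf)
    next
      case False
      then have "i = 0" by simp
      then show ?thesis using cons i by (simp add: Inl Amat_row gamma_ab_def)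
    qed
  next
    case (Inr j)
    then have j: "j < n" using c by (auto simp: vars_def)
    show ?thesis
    proof (cases "1 \<le> j")
      case True
      then show ?thesis using j by (simp add: Inr Amat_col gamma_Inr sum_subtractf)
    next
      case False
      then have j0: "j = 0" by simp
      have "(\<Sum>m\<in>{n<..n}. f n m) - (\<Sum>k<n. f k n) = of_int (Nfull n N n)"
        using flows_cons[OF f, of n] by simp
      then have "(\<Sum>k<n. f k n) = (\<Sum>k<n. of_int (N k))" by (simp add: Nfull_def)
      then show ?thesis using j j0 by (simp add: Inr Amat_col gamma_Inr)
    qed
  qed
qed



lemma F2:
  assumes a: "inP n N a" and n: "1 \<le> n"
  shows "\<exists>f\<in>flows n N. \<forall>(i,j)\<in>Pidx n. Amat n N f i j = a i j"
proof -
  define f where "f i m = (if i < m \<and> m \<le> n then a i (n-m) else 0)" for i m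
  have anon: "0 \<le> a i j" if "(i,j) \<in> Pidx n" for i j using a that by (auto simp: inP_def)
  have mg: "marg n a c = gamma_ab n N c" if "c \<in> vars n" for c using a that by (auto simp: inP_def)
  have out: "(\<Sum>m\<in>{i<..n}. f i m) = (\<Sum>m\<in>{i<..n}. a i (n-m))" for i
    by (intro sum.cong refl) (auto simp: f_def)
  have inn: "(\<Sum>k<i. f k i) = (\<Sum>k<i. a k (n-i))" if "i \<le> n" for i
    using that by (intro sum.cong refl) (auto simp: f_def)
  have row: "(\<Sum>m\<in>{i<..n}. a i (n-m)) + (if 1 \<le> i then a i (n-i) else 0) = gamma_ab n N (Inl i)"
    if "i < n" for i
    using mg[of "Inl i"] that by (simp add: marg_Inl_split vars_def)
  have col: "(\<Sum>k<i. a k (n-i)) + (if 1 \<le> n - i then a i (n-i) else 0) = gamma_ab n N (Inr (n-i))"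
    if "1 \<le> i" "i \<le> n" for i
  proof -
    have "n - i < n" using that by simp
    then have "marg n a (Inr (n-i)) = gamma_ab n N (Inr (n-i))" by (intro mg) (auto simp: vars_def)
    moreover have "n - (n - i) = i" using that by simp
    then have aa: "a (n - (n - i)) (n - i) = a i (n - i)" by simp
    ultimately show ?thesis using that \<open>n - i < n\<close> marg_Inr_split[of "n-i" n a] by (simp only: aa) simp
  qed
  have gcol: "gamma_ab n N (Inr (n-i)) = (\<Sum>k<i. of_int (N k))" if "1 \<le> i" "i \<le> n" for i
    using that by (simp add: gamma_Inr)
  have fl: "f \<in> flows n N"
    unfolding flows_def
  proof (intro CollectI conjI allI impI)
    fix i j assume "i < j \<and> j \<le> n"
    then show "0 \<le> f i j" by (auto simp: f_def intro!: anon simp: Pidx_def)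
  next
    fix i j assume "\<not> (i < j \<and> j \<le> n)"
    then show "f i j = 0" unfolding f_def by presburger
  next
    fix i assume i: "i \<le> n"
    show "(\<Sum>j\<in>{i<..n}. f i j) - (\<Sum>k<i. f k i) = of_int (Nfull n N i)"
    proof (cases "i = n")
      case True
      have "(\<Sum>k<n. a k (n-n)) = (\<Sum>k<n. of_int (N k))"
        using col[of n] gcol[of n] n by simp
      then show ?thesis using True inn[of n] by (simp add: Nfull_def)
    next
      case False
      then have il: "i < n" using i by simp
      show ?thesis
      proof (cases "i = 0")
        case True
        then show ?thesis using row[of 0] il by (simp add: out Nfull_def gamma_ab_def)
      next
        case F: False
        have r: "(\<Sum>m\<in>{i<..n}. a i (n-m)) + a i (n-i) = (\<Sum>k<i. of_int (N k)) + of_int (N i)"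
          using row[of i] il F by (simp add: gamma_Inl)
        have c: "(\<Sum>k<i. a k (n-i)) + a i (n-i) = (\<Sum>k<i. of_int (N k))"
        proof -
          have "1 \<le> n - i" using il by simp
          then show ?thesis using col[of i] gcol[of i] il F by simp
        qed
        show ?thesis using r c il by (simp add: out inn Nfull_def)
      qed
    qed
  qed
  have eq: "Amat n N f i j = a i j" if "(i,j) \<in> Pidx n" for i j
  proof (cases "i + j \<le> n - 1")
    case True
    then show ?thesis using n by (simp add: Amat_def f_def)
  next
    case False
    then have ij: "i + j = n" "1 \<le> i" "i \<le> n - 1" "j = n - i" using that by (auto simp: Pidx_def)
    have "Amat n N f i j = (\<Sum>k<i. of_int (N k) - f k i)" using False ij by (simp add: Amat_def)
    also have "\<dots> = (\<Sum>k<i. of_int (N k)) - (\<Sum>k<i. a k (n-i))"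
      using inn[of i] ij by (simp add: sum_subtractf)
    also have "\<dots> = a i j"
    proof -
      have "1 \<le> n - i" using ij n by simp
      then show ?thesis using col[of i] gcol[of i] ij by simp
    qed
    finally show ?thesis .
  qed
  show ?thesis using fl eq by blast
qed

lemma F3:
  assumes n: "1 \<le> n"
  shows "Hent n N f = Gf n (Amat n N f)"
proof -
  define A1 where "A1 = {(i,j). i + j < n}"
  define A2 where "A2 = {(i,j). i < n \<and> j < n \<and> i + j = n}"
  have U: "Pidx n = A1 \<union> A2" using n by (auto simp: Pidx_def A1_def A2_def)
  have fin1: "finite A1"
    by (rule finite_subset[of _ "{..<n} \<times> {..<n}"]) (auto simp: A1_def)
  have fin2: "finite A2"
    by (rule finite_subset[of _ "{..<n} \<times> {..<n}"]) (auto simp: A2_def)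
  have D: "A1 \<inter> A2 = {}" by (auto simp: A1_def A2_def)
  have S1: "(\<Sum>(i,j)\<in>A1. hfun (Amat n N f i j)) = (\<Sum>(i, j)\<in>{(i, j). i < j \<and> j \<le> n}. hfun (f i j))"
    by (rule sum.reindex_bij_witness[where i="\<lambda>(i,m). (i, n - m)" and j="\<lambda>(i,j). (i, n - j)"])
       (auto simp: A1_def Amat_def)
  have S2: "(\<Sum>(i,j)\<in>A2. hfun (Amat n N f i j)) = (\<Sum>j\<in>{0<..<n}. hfun (\<Sum>i<j. of_int (N i) - f i j))"
    by (rule sum.reindex_bij_witness[where i="\<lambda>i. (i, n - i)" and j="\<lambda>(i,j). i"])
       (auto simp: A2_def Amat_def)
  show ?thesis
    unfolding Gf_def Hent_def U using S1 S2 D fin1 fin2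
    by (subst sum.union_disjoint) auto
qed



definition Fe :: "nat \<Rightarrow> (nat \<Rightarrow> int) \<Rightarrow> real \<Rightarrow> (nat + nat \<Rightarrow> real) \<Rightarrow> real" where
  "Fe n N e q = Phi n N q + e * (\<Sum>c\<in>vars n. (q c)\<^sup>2)"

lemma Gf_nonneg: "inP n N a \<Longrightarrow> 0 \<le> Gf n a"
  unfolding Gf_def inP_def by (auto intro!: sum_nonneg hfun_nonneg)

lemma Phi_nonneg: "inP n N a \<Longrightarrow> q \<in> Dom n \<Longrightarrow> 0 \<le> Phi n N q"
  using Phi_ge Gf_nonneg by (meson order_trans)

lemma subseq_conv:
  fixes X :: "nat \<Rightarrow> 'a \<Rightarrow> real"
  assumes "finite I" "\<forall>k. \<forall>c\<in>I. \<bar>X k c\<bar> \<le> B"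
  shows "\<exists>r l. strict_mono r \<and> (\<forall>c\<in>I. (\<lambda>k. X (r k) c) \<longlonglongrightarrow> l c)"
  using assms
proof (induction I rule: finite_induct)
  case empty
  show ?case by (rule exI[of _ id]) (auto simp: strict_mono_def)
next
  case (insert c0 I)
  then obtain r l where r: "strict_mono r" and l: "\<forall>c\<in>I. (\<lambda>k. X (r k) c) \<longlonglongrightarrow> l c" by auto
  have "bounded (range (\<lambda>k. X (r k) c0))"
    using insert.prems by (intro boundedI[of _ B]) auto
  then obtain l0 s where s: "strict_mono s" and l0: "((\<lambda>k. X (r k) c0) \<circ> s) \<longlonglongrightarrow> l0"
    using bounded_imp_convergent_subsequence by blast
  have "\<forall>c\<in>insert c0 I. (\<lambda>k. X ((r \<circ> s) k) c) \<longlonglongrightarrow> (l(c0 := l0)) c"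
  proof
    fix c assume c: "c \<in> insert c0 I"
    show "(\<lambda>k. X ((r \<circ> s) k) c) \<longlonglongrightarrow> (l(c0 := l0)) c"
    proof (cases "c = c0")
      case True then show ?thesis using l0 by (simp add: comp_def)
    next
      case False
      then have "c \<in> I" using c by simp
      then have "((\<lambda>k. X (r k) c) \<circ> s) \<longlonglongrightarrow> l c" using l s by (intro LIMSEQ_subseq_LIMSEQ) auto
      then show ?thesis using False by (simp add: comp_def)
    qed
  qed
  moreover have "strict_mono (r \<circ> s)" using r s by (rule strict_mono_o)
  ultimately show ?case by blast
qed

lemma Fe_tendsto:
  assumes lim: "\<forall>c\<in>vars n. (\<lambda>k. X k c) \<longlonglongrightarrow> l c" and l: "l \<in> Dom n"
  shows "(\<lambda>k. Fe n N e (X k)) \<longlonglongrightarrow> Fe n N e l"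
proof -
  have "(\<lambda>k. phi (X k (Inl i) + X k (Inr j))) \<longlonglongrightarrow> phi (l (Inl i) + l (Inr j))"
    if ij: "(i,j) \<in> Pidx n" for i j
  proof -
    have v: "Inl i \<in> vars n" "Inr j \<in> vars n" using ij by (auto simp: Pidx_def vars_def)
    have "l (Inl i) + l (Inr j) < 0" using l ij by (auto simp: Dom_def)
    then have ne: "1 - exp (l (Inl i) + l (Inr j)) \<noteq> 0" by simp
    show ?thesis unfolding phi_def
      using lim v ne by (intro tendsto_intros) auto
  qed
  then have A: "(\<lambda>k. \<Sum>(i,j)\<in>Pidx n. phi (X k (Inl i) + X k (Inr j))) \<longlonglongrightarrow> (\<Sum>(i,j)\<in>Pidx n. phi (l (Inl i) + l (Inr j)))"
    by (intro tendsto_sum) auto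
  have B: "(\<lambda>k. \<Sum>c\<in>vars n. gamma_ab n N c * X k c) \<longlonglongrightarrow> (\<Sum>c\<in>vars n. gamma_ab n N c * l c)"
    using lim by (intro tendsto_intros) auto
  have C: "(\<lambda>k. \<Sum>c\<in>vars n. (X k c)\<^sup>2) \<longlonglongrightarrow> (\<Sum>c\<in>vars n. (l c)\<^sup>2)"
    using lim by (intro tendsto_intros) auto
  show ?thesis unfolding Fe_def Phi_def
    by (rule tendsto_add[OF tendsto_diff[OF A B] tendsto_mult[OF tendsto_const C]])
qed

lemma exp_bound_from_phi:
  assumes "w < 0" "phi w \<le> M"
  shows "exp w \<le> 1 - exp (- M)"
proof -
  have p: "0 < 1 - exp w" using assms by simp
  have "- M \<le> ln (1 - exp w)" using assms by (simp add: phi_def)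
  then have "exp (- M) \<le> exp (ln (1 - exp w))" by (simp only: exp_le_cancel_iff)
  also have "exp (ln (1 - exp w)) = 1 - exp w" using p by simp
  finally show ?thesis by linarith
qed

lemma exists_min:
  assumes e: "0 < e" and a0: "inP n N a0" and n: "1 \<le> n"
  shows "\<exists>q\<in>Dom n. \<forall>q'\<in>Dom n. Fe n N e q \<le> Fe n N e q'"
proof -
  define F where "F = Fe n N e"
  define D where "D = Dom n"
  define q0 :: "nat + nat \<Rightarrow> real" where "q0 c = (case c of Inl _ \<Rightarrow> -1 | Inr _ \<Rightarrow> 0)" for c
  have q0D: "q0 \<in> D" by (auto simp: D_def Dom_def q0_def)
  have Fnn: "0 \<le> F q" if "q \<in> D" for q
  proof -
    have "0 \<le> (\<Sum>c\<in>vars n. (q c)\<^sup>2)" by (simp add: sum_nonneg)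
    then have "0 \<le> e * (\<Sum>c\<in>vars n. (q c)\<^sup>2)" using e by simp
    then show ?thesis using Phi_nonneg[OF a0, of q] that unfolding F_def D_def Fe_def by simp
  qed
  define m where "m = Inf (F ` D)"
  have bdd: "bdd_below (F ` D)" using Fnn by (auto intro!: bdd_belowI[of _ 0])
  have mle: "m \<le> F q" if "q \<in> D" for q
    unfolding m_def using bdd that by (auto intro: cInf_lower)
  have "\<forall>k. \<exists>q. q \<in> D \<and> F q < m + inverse (real (Suc k))"
  proof
    fix k
    have "Inf (F ` D) < m + inverse (real (Suc k))" by (simp add: m_def)
    then obtain y where "y \<in> F ` D" "y < m + inverse (real (Suc k))"
      using cInf_lessD[of "F ` D"] q0D by blast
    then show "\<exists>q. q \<in> D \<and> F q < m + inverse (real (Suc k))" by auto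
  qed
  then obtain Q where QD: "\<And>k. Q k \<in> D" and Qm: "\<And>k. F (Q k) < m + inverse (real (Suc k))"
    by metis
  have FQ: "F (Q k) \<le> m + 1" for k
  proof -
    have "inverse (real (Suc k)) \<le> 1" by (simp add: inverse_le_1_iff)
    then show ?thesis using Qm[of k] by linarith
  qed
  define B where "B = sqrt ((m + 1) / e)"
  have QB: "\<bar>Q k c\<bar> \<le> B" if "c \<in> vars n" for k c
  proof -
    have "(Q k c)\<^sup>2 \<le> (\<Sum>c\<in>vars n. (Q k c)\<^sup>2)"
      using that by (intro member_le_sum) auto
    moreover have "e * (\<Sum>c\<in>vars n. (Q k c)\<^sup>2) \<le> m + 1"
      using FQ[of k] Phi_nonneg[OF a0 QD[of k, unfolded D_def]] unfolding F_def Fe_def by linarith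
    ultimately have "e * (Q k c)\<^sup>2 \<le> m + 1" using e by (meson mult_left_mono less_imp_le order_trans)
    then have "\<bar>Q k c\<bar>\<^sup>2 \<le> (m + 1) / e" using e by (simp add: field_simps)
    then show ?thesis unfolding B_def by (rule real_le_rsqrt)
  qed
  obtain r l where r: "strict_mono r" and l: "\<forall>c\<in>vars n. (\<lambda>k. Q (r k) c) \<longlonglongrightarrow> l c"
    using subseq_conv[of "vars n" Q B] QB by auto
  define M where "M = m + 1 + (\<Sum>c\<in>vars n. \<bar>gamma_ab n N c\<bar> * B)"
  have phiM: "phi (Q k (Inl i) + Q k (Inr j)) \<le> M" if ij: "(i,j) \<in> Pidx n" for k i j
  proof -
    have QDk: "Q k \<in> Dom n" using QD[of k] by (simp add: D_def)
    have "phi (Q k (Inl i) + Q k (Inr j)) \<le> (\<Sum>(i,j)\<in>Pidx n. phi (Q k (Inl i) + Q k (Inr j)))"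
      using member_le_sum[of "(i,j)" "Pidx n" "\<lambda>(i,j). phi (Q k (Inl i) + Q k (Inr j))"] ij QDk
      by (auto simp: Dom_def intro: phi_pos)
    also have "\<dots> = Phi n N (Q k) + (\<Sum>c\<in>vars n. gamma_ab n N c * Q k c)" by (simp add: Phi_def)
    also have "(\<Sum>c\<in>vars n. gamma_ab n N c * Q k c) \<le> (\<Sum>c\<in>vars n. \<bar>gamma_ab n N c\<bar> * B)"
    proof (intro sum_mono)
      fix c assume c: "c \<in> vars n"
      have "gamma_ab n N c * Q k c \<le> \<bar>gamma_ab n N c\<bar> * \<bar>Q k c\<bar>" by (simp add: abs_mult[symmetric])
      also have "\<dots> \<le> \<bar>gamma_ab n N c\<bar> * B" using QB[OF c] by (intro mult_left_mono) auto
      finally show "gamma_ab n N c * Q k c \<le> \<bar>gamma_ab n N c\<bar> * B" .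
    qed
    also have "Phi n N (Q k) \<le> m + 1"
      using FQ[of k] unfolding F_def Fe_def using e by (smt (verit) mult_nonneg_nonneg sum_nonneg zero_le_power2)
    finally show ?thesis by (simp add: M_def)
  qed
  have lD: "l \<in> D"
    unfolding D_def Dom_def
  proof (clarify)
    fix i j assume ij: "(i,j) \<in> Pidx n"
    have v: "Inl i \<in> vars n" "Inr j \<in> vars n" using ij by (auto simp: Pidx_def vars_def)
    have lim: "(\<lambda>k. exp (Q (r k) (Inl i) + Q (r k) (Inr j))) \<longlonglongrightarrow> exp (l (Inl i) + l (Inr j))"
      using l v by (intro tendsto_intros) auto
    have "\<forall>k. exp (Q (r k) (Inl i) + Q (r k) (Inr j)) \<le> 1 - exp (- M)"
      using QD phiM[OF ij] ij by (auto simp: D_def Dom_def intro!: exp_bound_from_phi)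
    then have "exp (l (Inl i) + l (Inr j)) \<le> 1 - exp (- M)"
      using lim by (intro LIMSEQ_le_const2) auto
    then have "exp (l (Inl i) + l (Inr j)) < 1" by (smt (verit) exp_gt_zero)
    then show "l (Inl i) + l (Inr j) < 0" by simp
  qed
  have lim1: "(\<lambda>k. F (Q (r k))) \<longlonglongrightarrow> F l"
    unfolding F_def using l lD by (intro Fe_tendsto) (auto simp: D_def)
  have lim2: "(\<lambda>k. m + inverse (real (Suc (r k)))) \<longlonglongrightarrow> m"
  proof -
    have "((\<lambda>k. inverse (real (Suc k))) \<circ> r) \<longlonglongrightarrow> 0"
      using LIMSEQ_inverse_real_of_nat r by (rule LIMSEQ_subseq_LIMSEQ)
    then have "(\<lambda>k. m + inverse (real (Suc (r k)))) \<longlonglongrightarrow> m + 0"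
      by (intro tendsto_add tendsto_const) (simp add: comp_def)
    then show ?thesis by simp
  qed
  have "F l \<le> m"
    using lim1 lim2 by (rule LIMSEQ_le) (use Qm in \<open>auto intro: less_imp_le\<close>)
  then have "\<forall>q'\<in>D. F l \<le> F q'" using mle by (meson order_trans)
  then show ?thesis using lD unfolding F_def D_def by blast
qed



definition aof :: "(nat + nat \<Rightarrow> real) \<Rightarrow> nat \<Rightarrow> nat \<Rightarrow> real" where
  "aof q i j = exp (q (Inl i) + q (Inr j)) / (1 - exp (q (Inl i) + q (Inr j)))"

lemma phi_deriv:
  assumes "w < 0"
  shows "((\<lambda>t. phi (w + t * s)) has_real_derivative (s * (exp w / (1 - exp w)))) (at 0)"
proof -
  have ne: "1 - exp w > 0" using assms by simp
  have "((\<lambda>t. - ln (1 - exp (w + t * s))) has_real_derivative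
          - ((0 - exp (w + 0 * s) * (0 + 1 * s)) / (1 - exp (w + 0 * s)))) (at 0)"
    by (rule derivative_eq_intros refl | use ne in simp)+
  then show ?thesis by (simp add: phi_def mult.commute)
qed

lemma ind_cases: "ind c x = 0 \<or> ind c x = 1"
  by (cases x) (auto simp: ind_def)

lemma FOC:
  assumes e: "0 < e" and qD: "q \<in> Dom n" and mn: "\<forall>q'\<in>Dom n. Fe n N e q \<le> Fe n N e q'"
    and c: "c \<in> vars n"
  shows "marg n (aof q) c = gamma_ab n N c - 2 * e * q c"
proof -
  define W where "W x = q (Inl (fst x)) + q (Inr (snd x))" for x
  have Wneg: "W x < 0" if "x \<in> Pidx n" for x using qD that by (auto simp: Dom_def W_def)
  define R1 where "R1 = (\<Sum>c'\<in>vars n - {c}. gamma_ab n N c' * q c')"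
  define R2 where "R2 = (\<Sum>c'\<in>vars n - {c}. (q c')\<^sup>2)"
  define g where "g t = (\<Sum>x\<in>Pidx n. phi (W x + t * ind c x)) - (gamma_ab n N c * (q c + t) + R1)
                      + e * ((q c + t)\<^sup>2 + R2)" for t
  have geq: "Fe n N e (q(c := q c + t)) = g t" for t
  proof -
    have s1: "(\<Sum>(i,j)\<in>Pidx n. phi ((q(c := q c + t)) (Inl i) + (q(c := q c + t)) (Inr j)))
              = (\<Sum>x\<in>Pidx n. phi (W x + t * ind c x))"
      by (intro sum.cong refl) (auto simp: W_def ind_def algebra_simps)
    have s2: "(\<Sum>c'\<in>vars n. gamma_ab n N c' * (q(c := q c + t)) c') = gamma_ab n N c * (q c + t) + R1"
      using c by (simp add: sum.remove R1_def)
    have s3: "(\<Sum>c'\<in>vars n. ((q(c := q c + t)) c')\<^sup>2) = (q c + t)\<^sup>2 + R2"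
      using c by (simp add: sum.remove R2_def)
    show ?thesis unfolding Fe_def Phi_def s1 s2 s3 g_def by simp
  qed
  have g0: "g 0 = Fe n N e q" using geq[of 0] by simp
  define D' where "D' = (\<Sum>x\<in>Pidx n. ind c x * (exp (W x) / (1 - exp (W x)))) - gamma_ab n N c + e * (2 * q c)"
  have dg: "(g has_real_derivative D') (at 0)"
  proof -
    have d1: "((\<lambda>t. \<Sum>x\<in>Pidx n. phi (W x + t * ind c x)) has_real_derivative
               (\<Sum>x\<in>Pidx n. ind c x * (exp (W x) / (1 - exp (W x))))) (at 0)"
    proof (rule DERIV_sum)
      fix x assume x: "x \<in> Pidx n"
      show "((\<lambda>t. phi (W x + t * ind c x)) has_real_derivative ind c x * (exp (W x) / (1 - exp (W x)))) (at 0)"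
        by (rule phi_deriv[OF Wneg[OF x]])
    qed
    have d2: "((\<lambda>t. gamma_ab n N c * (q c + t) + R1) has_real_derivative gamma_ab n N c) (at 0)"
      by (rule derivative_eq_intros refl | simp)+
    have d3: "((\<lambda>t. e * ((q c + t)\<^sup>2 + R2)) has_real_derivative e * (2 * q c)) (at 0)"
      by (rule derivative_eq_intros refl | simp)+
    have "((\<lambda>t. (\<Sum>x\<in>Pidx n. phi (W x + t * ind c x)) - (gamma_ab n N c * (q c + t) + R1)
                      + e * ((q c + t)\<^sup>2 + R2)) has_real_derivative D') (at 0)"
      unfolding D'_def by (intro DERIV_add DERIV_diff d1 d2 d3)
    then show ?thesis unfolding g_def[abs_def] .
  qed
  define \<delta> where "\<delta> = Min (insert 1 ((\<lambda>x. - W x) ` Pidx n))"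
  have dpos: "0 < \<delta>" unfolding \<delta>_def using Wneg by (subst Min_gr_iff) auto
  have dle: "\<delta> \<le> - W x" if "x \<in> Pidx n" for x unfolding \<delta>_def using that by (intro Min_le) auto
  have lm: "\<forall>y. \<bar>0 - y\<bar> < \<delta> \<longrightarrow> g 0 \<le> g y"
  proof (intro allI impI)
    fix y :: real assume y: "\<bar>0 - y\<bar> < \<delta>"
    have "q(c := q c + y) \<in> Dom n"
      unfolding Dom_def
    proof (clarify)
      fix i j assume ij: "(i,j) \<in> Pidx n"
      have "(q(c := q c + y)) (Inl i) + (q(c := q c + y)) (Inr j) = W (i,j) + y * ind c (i,j)"
        by (auto simp: W_def ind_def)
      also have "y * ind c (i,j) \<le> \<bar>y\<bar>" using ind_cases[of c "(i,j)"] by auto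
      then have "W (i,j) + y * ind c (i,j) < 0" using dle[OF ij] y by linarith
      finally show "(q(c := q c + y)) (Inl i) + (q(c := q c + y)) (Inr j) < 0" .
    qed
    then show "g 0 \<le> g y" using mn g0 geq[of y] by auto
  qed
  have "D' = 0" by (rule DERIV_local_min[OF dg dpos lm])
  then have "(\<Sum>x\<in>Pidx n. ind c x * (exp (W x) / (1 - exp (W x)))) = gamma_ab n N c - 2 * e * q c"
    unfolding D'_def by simp
  moreover have "marg n (aof q) c = (\<Sum>x\<in>Pidx n. ind c x * (exp (W x) / (1 - exp (W x))))"
    unfolding marg_def by (intro sum.cong refl) (auto simp: aof_def W_def)
  ultimately show ?thesis by simp
qed

lemma Phi_le_Gf:
  assumes qD: "q \<in> Dom n" and mg: "\<forall>c\<in>vars n. marg n (aof q) c = gamma_ab n N c - 2 * e * q c"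
    and e: "0 \<le> e"
  shows "Phi n N q \<le> Gf n (aof q)"
proof -
  have "Gf n (aof q) = (\<Sum>(i,j)\<in>Pidx n. phi (q (Inl i) + q (Inr j)) - aof q i j * (q (Inl i) + q (Inr j)))"
    unfolding Gf_def using qD by (intro sum.cong refl) (auto simp: Dom_def aof_def key_eq)
  also have "\<dots> = (\<Sum>(i,j)\<in>Pidx n. phi (q (Inl i) + q (Inr j))) - (\<Sum>c\<in>vars n. marg n (aof q) c * q c)"
    by (simp add: sum_subtractf case_prod_unfold pair_sum[symmetric])
  also have "(\<Sum>c\<in>vars n. marg n (aof q) c * q c) = (\<Sum>c\<in>vars n. gamma_ab n N c * q c - 2 * e * (q c)\<^sup>2)"
  proof (intro sum.cong refl)
    fix x assume "x \<in> vars n"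
    then have "marg n (aof q) x = gamma_ab n N x - 2 * e * q x" using mg by auto
    then show "marg n (aof q) x * q x = gamma_ab n N x * q x - 2 * e * (q x)\<^sup>2"
      by (simp only: power2_eq_square left_diff_distrib mult.assoc)
  qed
  also have "\<dots> = (\<Sum>c\<in>vars n. gamma_ab n N c * q c) - 2 * e * (\<Sum>c\<in>vars n. (q c)\<^sup>2)"
    by (simp add: sum_subtractf sum_distrib_left)
  finally have "Gf n (aof q) = Phi n N q + 2 * e * (\<Sum>c\<in>vars n. (q c)\<^sup>2)"
    by (simp add: Phi_def)
  moreover have "0 \<le> 2 * e * (\<Sum>c\<in>vars n. (q c)\<^sup>2)" using e by (simp add: sum_nonneg)
  ultimately show ?thesis by linarith
qed



definition q0 :: "nat + nat \<Rightarrow> real" where "q0 c = (case c of Inl _ \<Rightarrow> -1 | Inr _ \<Rightarrow> 0)"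

lemma q0_Dom: "q0 \<in> Dom n" by (auto simp: Dom_def q0_def)

lemma aof_nonneg: "q \<in> Dom n \<Longrightarrow> (i,j) \<in> Pidx n \<Longrightarrow> 0 \<le> aof q i j"
  unfolding aof_def Dom_def by (auto intro!: divide_nonneg_pos)

lemma REG:
  assumes e: "0 < e" "e \<le> 1" and a0: "inP n N a0" and n: "1 \<le> n"
  shows "\<exists>q. q \<in> Dom n \<and> (\<forall>c\<in>vars n. marg n (aof q) c = gamma_ab n N c - 2 * e * q c)
           \<and> (\<forall>c\<in>vars n. (e * q c)\<^sup>2 \<le> e * (Phi n N q0 + (\<Sum>c\<in>vars n. (q0 c)\<^sup>2)))
           \<and> Phi n N q \<le> Gf n (aof q)"
proof -
  obtain q where qD: "q \<in> Dom n" and mn: "\<forall>q'\<in>Dom n. Fe n N e q \<le> Fe n N e q'"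
    using exists_min[OF e(1) a0 n] by blast
  have mg: "\<forall>c\<in>vars n. marg n (aof q) c = gamma_ab n N c - 2 * e * q c"
    using FOC[OF e(1) qD mn] by blast
  define K where "K = Phi n N q0 + (\<Sum>c\<in>vars n. (q0 c)\<^sup>2)"
  have "Fe n N e q \<le> Fe n N e q0" using mn q0_Dom by blast
  then have h1: "Phi n N q + e * (\<Sum>c\<in>vars n. (q c)\<^sup>2) \<le> Phi n N q0 + e * (\<Sum>c\<in>vars n. (q0 c)\<^sup>2)"
    by (simp add: Fe_def)
  have "e * (\<Sum>c\<in>vars n. (q0 c)\<^sup>2) \<le> 1 * (\<Sum>c\<in>vars n. (q0 c)\<^sup>2)"
    using e by (intro mult_right_mono) (auto simp: sum_nonneg)
  then have h2: "e * (\<Sum>c\<in>vars n. (q c)\<^sup>2) \<le> K"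
    using h1 Phi_nonneg[OF a0 qD] unfolding K_def by linarith
  have bnd: "(e * q c)\<^sup>2 \<le> e * K" if "c \<in> vars n" for c
  proof -
    have "(q c)\<^sup>2 \<le> (\<Sum>c\<in>vars n. (q c)\<^sup>2)" using that by (intro member_le_sum) auto
    then have "e * (q c)\<^sup>2 \<le> K" using h2 e by (meson mult_left_mono less_imp_le order_trans)
    then have "e * (e * (q c)\<^sup>2) \<le> e * K" using e by (intro mult_left_mono) auto
    then show ?thesis by (simp add: power2_eq_square mult_ac)
  qed
  show ?thesis
    using qD mg bnd Phi_le_Gf[OF qD mg] e unfolding K_def by auto
qed

lemma prod_psi:
  assumes "\<forall>(i,j)\<in>Pidx n. 0 \<le> b i j"
  shows "(\<Prod>(i,j)\<in>Pidx n. psi (b i j)) = exp (Gf n b)"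
proof -
  have "(\<Prod>(i,j)\<in>Pidx n. psi (b i j)) = (\<Prod>(i,j)\<in>Pidx n. exp (hfun (b i j)))"
    using assms by (intro prod.cong refl) (auto simp: psi_exp_hfun)
  then show ?thesis by (simp add: Gf_def exp_sum case_prod_unfold)
qed



lemma cap_lower:
  assumes a: "inP n N a"
  shows "ennreal (exp (Gf n a)) \<le> cap (vars n) (gamma_ab n N) (gen_series n)"
  unfolding cap_def
proof (rule INF_greatest)
  fix z :: "nat + nat \<Rightarrow> real" assume "z \<in> {z. \<forall>v\<in>vars n. 0 < z v}"
  then have zp: "\<forall>c\<in>vars n. 0 < z c" by simp
  have dpos: "0 < (\<Prod>c\<in>vars n. z c powr gamma_ab n N c)"
    using zp by (intro prod_pos) auto
  show "ennreal (exp (Gf n a)) \<le> gen_series n z / ennreal (\<Prod>c\<in>vars n. z c powr gamma_ab n N c)"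
  proof (cases "\<forall>(i,j)\<in>Pidx n. z (Inl i) * z (Inr j) < 1")
    case True
    have lD: "(\<lambda>c. ln (z c)) \<in> Dom n"
      unfolding Dom_def
    proof (clarify)
      fix i j assume ij: "(i,j) \<in> Pidx n"
      have p: "0 < z (Inl i)" "0 < z (Inr j)" using zp ij by (auto simp: vars_def Pidx_def)
      have "ln (z (Inl i)) + ln (z (Inr j)) = ln (z (Inl i) * z (Inr j))" using p by (simp add: ln_mult)
      also have "\<dots> < 0" using True ij p by auto
      finally show "ln (z (Inl i)) + ln (z (Inr j)) < 0" .
    qed
    have "Gf n a \<le> Phi n N (\<lambda>c. ln (z c))" by (rule Phi_ge[OF a lD])
    then show ?thesis unfolding ratio_eq[OF zp True] by (intro ennreal_leI) simp
  next
    case False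
    then obtain i j where ij: "(i,j) \<in> Pidx n" "1 \<le> z (Inl i) * z (Inr j)" by auto
    have "gen_series n z = top" by (rule ratio_top[OF zp ij])
    then show ?thesis by (simp add: ennreal_top_divide)
  qed
qed

lemma cap_upper_pt:
  assumes qD: "q \<in> Dom n"
  shows "cap (vars n) (gamma_ab n N) (gen_series n) \<le> ennreal (exp (Phi n N q))"
proof -
  define z where "z c = exp (q c)" for c
  have zp: "\<forall>c\<in>vars n. 0 < z c" by (simp add: z_def)
  have lt: "\<forall>(i,j)\<in>Pidx n. z (Inl i) * z (Inr j) < 1"
    using qD by (auto simp: Dom_def z_def exp_add[symmetric])
  have "cap (vars n) (gamma_ab n N) (gen_series n) \<le> gen_series n z / ennreal (\<Prod>c\<in>vars n. z c powr gamma_ab n N c)"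
    unfolding cap_def using zp by (intro INF_lower) auto
  also have "\<dots> = ennreal (exp (Phi n N q))"
    unfolding ratio_eq[OF zp lt] by (simp add: z_def)
  finally show ?thesis .
qed



theorem proposition3p1:
  fixes n :: nat and N :: "nat \<Rightarrow> int"
  assumes "1 \<le> n"
    and "flows n N \<noteq> {}"
  shows "cap (vars n) (gamma_ab n N) (gen_series n)
           = (SUP f\<in>flows n N. ennreal (\<Prod>(i, j)\<in>Pidx n. psi (Amat n N f i j)))
       \<and> (SUP f\<in>flows n N. ennreal (\<Prod>(i, j)\<in>Pidx n. psi (Amat n N f i j)))
           = (SUP f\<in>flows n N. ennreal (exp (Hent n N f)))"
proof -
  note n = assms(1)
  obtain f0 where f0: "f0 \<in> flows n N" using assms(2) by blast
  have a0: "inP n N (Amat n N f0)" by (rule F1[OF f0 n])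
  have pp: "(\<Prod>(i, j)\<in>Pidx n. psi (Amat n N f i j)) = exp (Gf n (Amat n N f))" if "f \<in> flows n N" for f
    using F1[OF that n] by (intro prod_psi) (auto simp: inP_def)
  have E2: "(SUP f\<in>flows n N. ennreal (\<Prod>(i, j)\<in>Pidx n. psi (Amat n N f i j)))
           = (SUP f\<in>flows n N. ennreal (exp (Hent n N f)))"
    by (intro SUP_cong refl) (simp add: pp F3[OF n])
  define S where "S = (SUP f\<in>flows n N. ennreal (\<Prod>(i, j)\<in>Pidx n. psi (Amat n N f i j)))"
  define C where "C = cap (vars n) (gamma_ab n N) (gen_series n)"
  have ge: "S \<le> C"
    unfolding S_def C_def
  proof (rule SUP_least)
    fix f assume f: "f \<in> flows n N"
    show "ennreal (\<Prod>(i, j)\<in>Pidx n. psi (Amat n N f i j)) \<le> cap (vars n) (gamma_ab n N) (gen_series n)"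
      unfolding pp[OF f] by (rule cap_lower[OF F1[OF f n]])
  qed
  define K where "K = Phi n N q0 + (\<Sum>c\<in>vars n. (q0 c)\<^sup>2)"
  have K0: "0 \<le> K" unfolding K_def using Phi_nonneg[OF a0 q0_Dom] by (simp add: sum_nonneg)
  define ep where "ep k = inverse (real (Suc k))" for k
  have ep: "0 < ep k" "ep k \<le> 1" for k by (auto simp: ep_def inverse_le_1_iff)
  have "\<forall>k. \<exists>q. q \<in> Dom n \<and> (\<forall>c\<in>vars n. marg n (aof q) c = gamma_ab n N c - 2 * ep k * q c)
           \<and> (\<forall>c\<in>vars n. (ep k * q c)\<^sup>2 \<le> ep k * K) \<and> Phi n N q \<le> Gf n (aof q)"
    using REG[OF ep a0 n] unfolding K_def by blast
  then obtain Q where QD: "\<And>k. Q k \<in> Dom n"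
    and Qm: "\<And>k c. c \<in> vars n \<Longrightarrow> marg n (aof (Q k)) c = gamma_ab n N c - 2 * ep k * Q k c"
    and Qb: "\<And>k c. c \<in> vars n \<Longrightarrow> (ep k * Q k c)\<^sup>2 \<le> ep k * K"
    and QG: "\<And>k. Phi n N (Q k) \<le> Gf n (aof (Q k))"
    by metis
  have Cle: "C \<le> ennreal (exp (Gf n (aof (Q k))))" for k
  proof -
    have "C \<le> ennreal (exp (Phi n N (Q k)))" unfolding C_def by (rule cap_upper_pt[OF QD])
    also have "\<dots> \<le> ennreal (exp (Gf n (aof (Q k))))" using QG[of k] by (intro ennreal_leI) simp
    finally show ?thesis .
  qed
  have epq: "\<bar>ep k * Q k c\<bar> \<le> sqrt (ep k * K)" if "c \<in> vars n" for k c
  proof -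
    have "\<bar>ep k * Q k c\<bar>\<^sup>2 \<le> ep k * K" using Qb[OF that] by simp
    then show ?thesis by (rule real_le_rsqrt)
  qed
  have epq1: "\<bar>ep k * Q k c\<bar> \<le> sqrt K" if "c \<in> vars n" for k c
  proof -
    have "ep k * K \<le> K" using ep[of k] K0 by (simp add: mult_left_le_one_le)
    then show ?thesis using epq[OF that, of k] by (meson order_trans real_sqrt_le_iff)
  qed
  define X where "X k x = aof (Q k) (fst x) (snd x)" for k x
  define B where "B = (\<Sum>c\<in>vars n. \<bar>gamma_ab n N c\<bar>) + 2 * sqrt K"
  have XB: "\<bar>X k x\<bar> \<le> B" if x: "x \<in> Pidx n" for k x
  proof -
    obtain i j where ij: "x = (i,j)" by (cases x)
    have xi: "(i,j) \<in> Pidx n" using x ij by simp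
    have vi: "Inl i \<in> vars n" using xi by (auto simp: Pidx_def vars_def)
    have nn: "0 \<le> aof (Q k) i j" by (rule aof_nonneg[OF QD xi])
    have "aof (Q k) i j = aof (Q k) i j * ind (Inl i) (i,j)" by (simp add: ind_def)
    also have "\<dots> \<le> marg n (aof (Q k)) (Inl i)"
    proof -
      have "(\<lambda>(i',j'). aof (Q k) i' j' * ind (Inl i) (i',j')) (i,j)
            \<le> (\<Sum>x\<in>Pidx n. (\<lambda>(i',j'). aof (Q k) i' j' * ind (Inl i) (i',j')) x)"
      proof (rule member_le_sum[OF xi _ finite_Pidx])
        fix x assume "x \<in> Pidx n - {(i,j)}"
        then show "0 \<le> (\<lambda>(i',j'). aof (Q k) i' j' * ind (Inl i) (i',j')) x"
          by (cases x) (auto intro!: mult_nonneg_nonneg aof_nonneg[OF QD] simp: ind_def)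
      qed
      then show ?thesis unfolding marg_def by simp
    qed
    also have "\<dots> = gamma_ab n N (Inl i) - 2 * (ep k * Q k (Inl i))" using Qm[OF vi] by simp
    also have "\<dots> \<le> \<bar>gamma_ab n N (Inl i)\<bar> + 2 * sqrt K" using epq1[OF vi, of k] by linarith
    also have "\<bar>gamma_ab n N (Inl i)\<bar> \<le> (\<Sum>c\<in>vars n. \<bar>gamma_ab n N c\<bar>)"
      using vi by (intro member_le_sum) auto
    finally show ?thesis using nn by (simp add: X_def ij B_def)
  qed
  obtain r Al where r: "strict_mono r" and Al: "\<forall>x\<in>Pidx n. (\<lambda>k. X (r k) x) \<longlonglongrightarrow> Al x"
    using subseq_conv[of "Pidx n" X B] XB by auto
  define astar where "astar i j = Al (i,j)" for i j
  have Xnn: "0 \<le> X k x" if "x \<in> Pidx n" for k x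
    using that aof_nonneg[OF QD] by (cases x) (auto simp: X_def)
  have anon: "0 \<le> astar i j" if "(i,j) \<in> Pidx n" for i j
  proof -
    have "(\<lambda>k. X (r k) (i,j)) \<longlonglongrightarrow> Al (i,j)" using Al that by auto
    then show ?thesis unfolding astar_def by (rule LIMSEQ_le_const) (use Xnn[OF that] in auto)
  qed
  have eplim: "(\<lambda>k. ep (r k)) \<longlonglongrightarrow> 0"
  proof -
    have "((\<lambda>k. inverse (real (Suc k))) \<circ> r) \<longlonglongrightarrow> 0"
      using LIMSEQ_inverse_real_of_nat r by (rule LIMSEQ_subseq_LIMSEQ)
    then show ?thesis by (simp add: comp_def ep_def)
  qed
  have amarg: "marg n astar c = gamma_ab n N c" if c: "c \<in> vars n" for c
  proof -
    have l1: "(\<lambda>k. marg n (aof (Q (r k))) c) \<longlonglongrightarrow> marg n astar c"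
      unfolding marg_def
    proof (intro tendsto_sum)
      fix x assume x: "x \<in> Pidx n"
      have "(\<lambda>k. X (r k) x) \<longlonglongrightarrow> Al x" using Al x by auto
      then show "(\<lambda>k. case x of (i, j) \<Rightarrow> aof (Q (r k)) i j * ind c (i, j)) \<longlonglongrightarrow> (case x of (i, j) \<Rightarrow> astar i j * ind c (i, j))"
        by (cases x) (auto simp: X_def astar_def intro!: tendsto_intros)
    qed
    have z: "(\<lambda>k. ep (r k) * Q (r k) c) \<longlonglongrightarrow> 0"
    proof (rule Lim_null_comparison)
      show "\<forall>\<^sub>F k in sequentially. norm (ep (r k) * Q (r k) c) \<le> sqrt (ep (r k) * K)"
        using epq[OF c] by simp
      have "(\<lambda>k. sqrt (ep (r k) * K)) \<longlonglongrightarrow> sqrt (0 * K)"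
        using eplim by (intro tendsto_intros)
      then show "(\<lambda>k. sqrt (ep (r k) * K)) \<longlonglongrightarrow> 0" by simp
    qed
    have l2: "(\<lambda>k. marg n (aof (Q (r k))) c) \<longlonglongrightarrow> gamma_ab n N c"
    proof -
      have "(\<lambda>k. gamma_ab n N c - 2 * (ep (r k) * Q (r k) c)) \<longlonglongrightarrow> gamma_ab n N c - 2 * 0"
        using z by (intro tendsto_intros)
      then show ?thesis using Qm[OF c] by (simp add: mult.assoc)
    qed
    show ?thesis using LIMSEQ_unique[OF l1 l2] .
  qed
  have ainP: "inP n N astar" unfolding inP_def using anon amarg by auto
  have Glim: "(\<lambda>k. Gf n (aof (Q (r k)))) \<longlonglongrightarrow> Gf n astar"
    unfolding Gf_def
  proof (intro tendsto_sum)
    fix x assume x: "x \<in> Pidx n"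
    have "(\<lambda>k. hfun (X (r k) x)) \<longlonglongrightarrow> hfun (Al x)"
      by (rule continuous_on_tendsto_compose[OF cont_hfun]) (use Al x anon[of "fst x" "snd x"] Xnn in \<open>auto simp: astar_def\<close>)
    then show "(\<lambda>k. case x of (i, j) \<Rightarrow> hfun (aof (Q (r k)) i j)) \<longlonglongrightarrow> (case x of (i, j) \<Rightarrow> hfun (astar i j))"
      by (cases x) (simp add: X_def astar_def)
  qed
  have "(\<lambda>k. ennreal (exp (Gf n (aof (Q (r k)))))) \<longlonglongrightarrow> ennreal (exp (Gf n astar))"
    using Glim by (intro tendsto_ennrealI tendsto_exp)
  then have Cle2: "C \<le> ennreal (exp (Gf n astar))"
    by (rule LIMSEQ_le_const) (use Cle in auto)
  obtain fs where fs: "fs \<in> flows n N" and fA: "\<forall>(i,j)\<in>Pidx n. Amat n N fs i j = astar i j"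
    using F2[OF ainP n] by blast
  have "Gf n astar = Gf n (Amat n N fs)"
    unfolding Gf_def using fA by (intro sum.cong refl) auto
  then have "exp (Gf n astar) = (\<Prod>(i, j)\<in>Pidx n. psi (Amat n N fs i j))" using pp[OF fs] by simp
  then have "ennreal (exp (Gf n astar)) \<le> S" unfolding S_def using fs by (auto intro: SUP_upper)
  with Cle2 have "C \<le> S" by simp
  with ge have "C = S" by simp
  then show ?thesis using E2 unfolding C_def S_def by simp
qed

end
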